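(* Assume the setting and hypotheses below (with $d=2$). For $x\in X$, $t\in\mathbb{R}^2$ and $N\in\mathbb{N}$ let $\ell(x,t,N)=\mathrm{Card}(n\in\{0,1,\dots,N\}:\|\tau_n(x)-t\|\le1)$. Then for each $p\in\mathbb{N}$ there is a constant $C_p$ such that for each $t\in\mathbb{R}^2$ and each integer $N\ge2$, $\int_X\ell^p(x,t,N)\,d\mu(x)\le C_p\ln^pN$.
   Context: Setting: $f:X\to X$ smooth map of a manifold preserving a probability $\mu$, ergodic, satisfying the CLT for smooth observables; $(G_t)_{t\in\mathbb{R}^2}$ an $\mathbb{R}^2$ action on a manifold $Y$ preserving a probability $\nu$ enjoying multiple exponential mixing of all orders; $\tau:X\to\mathbb{R}^2$ smooth with $\tau_n=\sum_{k=0}^{n-1}\tau\circ f^k$, satisfying the MMLLT (multiple mixing local limit theorem with a non-degenerate Gaussian density) and the anticoncentration large deviation bound: for every $s\ge1$ there are $K$ and a decreasing $\Theta$ with $\int_1^\infty\Theta(r)r^2dr<\infty$ such that for all integers $0=n_0<n_1<\dots<n_s$ and unit cubes $C_j$ centered at $c_j$ ($c_0=0$), $\mu(x:\tau_{n_j}(x)\in C_j,\ j=1,\dots,s)\le K\prod_{j=1}^s(n_j-n_{j-1})^{-1}\Theta\left(\max_j\frac{\|c_j-c_{j-1}\|}{\sqrt{n_j-n_{j-1}}}\right)$. *)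

theory Defs
  imports "HOL-Probability.Probability"
begin

definition birkhoff_sum :: "('a \<Rightarrow> 'a) \<Rightarrow> ('a \<Rightarrow> real^2) \<Rightarrow> nat \<Rightarrow> 'a \<Rightarrow> real^2" where
  "birkhoff_sum f \<tau> n x = (\<Sum>k<n. \<tau> ((f ^^ k) x))"

definition unit_cube :: "real^2 \<Rightarrow> (real^2) set" where
  "unit_cube c = {y. \<forall>i. \<bar>y $ i - c $ i\<bar> \<le> 1/2}"

definition local_time :: "('a \<Rightarrow> 'a) \<Rightarrow> ('a \<Rightarrow> real^2) \<Rightarrow> 'a \<Rightarrow> real^2 \<Rightarrow> nat \<Rightarrow> nat" where
  "local_time f \<tau> x t N = card {n \<in> {0..N}. norm (birkhoff_sum f \<tau> n x - t) \<le> 1}"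

definition anticoncentration :: "'a measure \<Rightarrow> ('a \<Rightarrow> 'a) \<Rightarrow> ('a \<Rightarrow> real^2) \<Rightarrow> bool" where
  "anticoncentration \<mu> f \<tau> \<longleftrightarrow>
    (\<forall>s::nat. s \<ge> 1 \<longrightarrow>
      (\<exists>(K::real) (\<Theta>::real \<Rightarrow> real).
         antimono \<Theta> \<and>
         (\<lambda>r. \<Theta> r * r ^ 2) integrable_on {1..} \<and>
         (\<forall>(n::nat \<Rightarrow> nat) (c::nat \<Rightarrow> real^2).
            n 0 = 0 \<longrightarrow> (\<forall>j\<in>{1..s}. n (j - 1) < n j) \<longrightarrow> c 0 = 0 \<longrightarrow>
            measure \<mu> {x \<in> space \<mu>. \<forall>j\<in>{1..s}. birkhoff_sum f \<tau> (n j) x \<in> unit_cube (c j)}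
              \<le> K * (\<Prod>j\<in>{1..s}. 1 / real (n j - n (j - 1)))
                  * \<Theta> (Max ((\<lambda>j. norm (c j - c (j - 1)) / sqrt (real (n j - n (j - 1)))) ` {1..s})))))"

end

theory Submission
  imports Defs
begin


lemma int_restrict_const:
  fixes S :: "real set" and B :: real
  assumes "{a..b} \<subseteq> S"
  shows "(\<lambda>r. if r \<in> {a..b} then B else 0) integrable_on S"
     and "integral S (\<lambda>r. if r \<in> {a..b} then B else 0) = B * (b - a) \<or> b < a"
proof -
  have e: "(\<lambda>r. if r \<in> S then (if r \<in> {a..b} then B else 0) else 0) = (\<lambda>r. if r \<in> {a..b} then B else 0)"
  proof (rule ext)
    fix r show "(if r \<in> S then (if r \<in> {a..b} then B else 0) else 0) = (if r \<in> {a..b} then B else 0)"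
      using assms by (cases "r \<in> {a..b}") auto
  qed
  have i: "(\<lambda>r. B) integrable_on {a..b}" by (rule integrable_const_ivl)
  hence "(\<lambda>r. if r \<in> {a..b} then B else 0) integrable_on UNIV"
    by (subst integrable_restrict_UNIV)
  then show "(\<lambda>r. if r \<in> {a..b} then B else 0) integrable_on S"
    by (subst integrable_restrict_UNIV[symmetric]) (simp only: e)
  have "integral S (\<lambda>r. if r \<in> {a..b} then B else 0) = integral UNIV (\<lambda>r. if r \<in> {a..b} then B else 0)"
    by (subst integral_restrict_UNIV[symmetric]) (simp only: e)
  also have "\<dots> = integral {a..b} (\<lambda>r. B)"
    by (subst integral_restrict_UNIV[symmetric]) simp
  finally show "integral S (\<lambda>r. if r \<in> {a..b} then B else 0) = B * (b - a) \<or> b < a"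
    by (cases "a \<le> b") (auto simp: content_real)
qed

lemma theta_nonneg:
  fixes \<Theta> :: "real \<Rightarrow> real"
  assumes am: "antimono \<Theta>" and int: "(\<lambda>r. \<Theta> r * r ^ 2) integrable_on {1..}"
  shows "0 \<le> \<Theta> r0"
proof (rule ccontr)
  assume neg: "\<not> 0 \<le> \<Theta> r0"
  define a where "a = max 1 r0"
  define c where "c = - \<Theta> r0"
  have c: "c > 0" using neg c_def by simp
  define B where "B = \<bar>\<Theta> 1\<bar> * a^2"
  have B: "B \<ge> 0" unfolding B_def by simp
  have a1: "a \<ge> 1" unfolding a_def by simp
  define u where "u = (\<lambda>r. (if r \<in> {1..a} then B else 0) - \<Theta> r * r ^ 2)"
  have uint: "u integrable_on {1..}" unfolding u_def
    by (intro integrable_diff int int_restrict_const(1)) auto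
  have bigR: "c * R \<le> integral {1..} u + B * (a - 1)" if R: "R \<ge> 0" for R
  proof -
    define v where "v = (\<lambda>r. if r \<in> {a..a+R} then c else 0)"
    have vint: "v integrable_on {1..}" unfolding v_def
      by (rule int_restrict_const(1)) (use a1 in auto)
    have vI: "integral {1..} v = c * R" unfolding v_def
      using int_restrict_const(2)[of a "a+R" "{1..}" c] a1 R by auto
    have "v r \<le> u r" if r: "r \<in> {1..}" for r
    proof (cases "r \<ge> a")
      case True
      have "\<Theta> r \<le> \<Theta> r0" using am True unfolding antimono_def a_def by auto
      moreover have "r^2 \<ge> 1" using True a1 by (simp add: one_le_power)
      moreover have "\<Theta> r \<le> 0" using \<open>\<Theta> r \<le> \<Theta> r0\<close> neg by linarith
      ultimately have "\<Theta> r * r^2 \<le> \<Theta> r * 1"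
        by (intro mult_left_mono_neg) auto
      then have "\<Theta> r * r^2 \<le> \<Theta> r0 * 1" using \<open>\<Theta> r \<le> \<Theta> r0\<close> by linarith
      then have "- \<Theta> r * r^2 \<ge> c" unfolding c_def by simp
      then show ?thesis unfolding u_def v_def using B c by auto
    next
      case False
      have r1: "r \<ge> 1" using r by auto
      have "\<Theta> r \<le> \<Theta> 1" using am r1 unfolding antimono_def by auto
      have "\<Theta> r * r^2 \<le> \<bar>\<Theta> 1\<bar> * a^2"
      proof (cases "\<Theta> r \<ge> 0")
        case True
        have "r^2 \<le> a^2" using False r1 by (intro power_mono) auto
        have "\<Theta> r \<le> \<bar>\<Theta> 1\<bar>" using \<open>\<Theta> r \<le> \<Theta> 1\<close> by linarith
        then show ?thesis using \<open>r^2 \<le> a^2\<close> True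
          by (intro mult_mono) auto
      next
        case False
        then have "\<Theta> r * r^2 \<le> 0" by (simp add: mult_nonpos_nonneg)
        moreover have "0 \<le> \<bar>\<Theta> 1\<bar> * a^2" by simp
        ultimately show ?thesis by linarith
      qed
      then show ?thesis unfolding u_def v_def B_def using False r1 by auto
    qed
    then have "integral {1..} v \<le> integral {1..} u"
      by (intro integral_le vint uint) auto
    moreover have "0 \<le> B * (a - 1)" using B a1 by simp
    ultimately show ?thesis using vI by linarith
  qed
  define R where "R = (\<bar>integral {1..} u\<bar> + B * (a - 1) + 1) / c"
  have "R \<ge> 0" unfolding R_def using c B a1 by simp
  from bigR[OF this] have "c * R \<le> integral {1..} u + B * (a - 1)" .
  moreover have "c * R = \<bar>integral {1..} u\<bar> + B * (a - 1) + 1" unfolding R_def using c by simp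
  ultimately show False by linarith
qed


lemma pow_bound: "real a ^ p \<le> real p ^ p * (1 + real (a choose p))"
proof (cases "p \<le> a")
  case True
  show ?thesis
  proof (cases "p = 0")
    case True then show ?thesis by simp
  next
    case False
    have "(real a / real p) ^ p \<le> real (a choose p)"
      using binomial_ge_n_over_k_pow_k[OF True] by simp
    then have "real a ^ p / real p ^ p \<le> real (a choose p)" by (simp add: power_divide)
    then have "real a ^ p \<le> real p ^ p * real (a choose p)"
      using False by (simp add: divide_le_eq mult.commute)
    also have "\<dots> \<le> real p ^ p * (1 + real (a choose p))" by (intro mult_left_mono) auto
    finally show ?thesis .
  qed
next
  case False
  then have "real a ^ p \<le> real p ^ p" by (intro power_mono) auto
  also have "\<dots> \<le> real p ^ p * (1 + real (a choose p))"
    using mult_left_mono[of 1 "1 + real (a choose p)" "real p ^ p"] by simp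
  finally show ?thesis .
qed

lemma card_subsets_le:
  fixes S :: "'a::linorder set"
  assumes "finite S"
  shows "card S choose p \<le> card {xs. sorted_wrt (<) xs \<and> length xs = p \<and> set xs \<subseteq> S}"
proof -
  have "card S choose p = card {B. B \<subseteq> S \<and> card B = p}" using n_subsets[OF assms] by simp
  also have "\<dots> \<le> card {xs. sorted_wrt (<) xs \<and> length xs = p \<and> set xs \<subseteq> S}"
  proof -
    have i: "inj_on sorted_list_of_set {B. B \<subseteq> S \<and> card B = p}"
      by (rule inj_onI) (metis (no_types, lifting) assms mem_Collect_eq rev_finite_subset set_sorted_list_of_set)
    have im: "sorted_list_of_set ` {B. B \<subseteq> S \<and> card B = p} \<subseteq> {xs. sorted_wrt (<) xs \<and> length xs = p \<and> set xs \<subseteq> S}"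
    proof
      fix ys assume "ys \<in> sorted_list_of_set ` {B. B \<subseteq> S \<and> card B = p}"
      then obtain B where B: "B \<subseteq> S" "card B = p" "ys = sorted_list_of_set B" by auto
      then have fB: "finite B" using assms finite_subset by blast
      show "ys \<in> {xs. sorted_wrt (<) xs \<and> length xs = p \<and> set xs \<subseteq> S}"
        using B fB by (simp add: strict_sorted_list_of_set)
    qed
    have f: "finite {xs. sorted_wrt (<) xs \<and> length xs = p \<and> set xs \<subseteq> S}"
      by (rule finite_subset[OF _ finite_lists_length_eq[OF assms, of p]]) auto
    show ?thesis using card_inj_on_le[OF i im f] .
  qed
  finally show ?thesis .
qed

fun gw :: "nat \<Rightarrow> nat list \<Rightarrow> real" where
  "gw a [] = 1"
| "gw a (m # ys) = 1 / real (m - a) * gw m ys"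

lemma gw_nonneg: "0 \<le> gw a xs"
  by (induction xs arbitrary: a) auto

lemma gw_prod: "(\<Prod>j\<in>{1..length xs}. 1 / real ((a # xs) ! j - (a # xs) ! (j - 1))) = gw a xs"
proof (induction xs arbitrary: a)
  case Nil then show ?case by simp
next
  case (Cons m ys)
  have "{1..length (m # ys)} = insert 1 (Suc ` {1..length ys})"
    by (auto simp: image_Suc_atLeastAtMost)
  then have "(\<Prod>j\<in>{1..length (m # ys)}. 1 / real ((a # m # ys) ! j - (a # m # ys) ! (j - 1)))
     = 1 / real (m - a) * (\<Prod>j\<in>Suc ` {1..length ys}. 1 / real ((a # m # ys) ! j - (a # m # ys) ! (j - 1)))"
    by (simp add: prod.insert)
  also have "(\<Prod>j\<in>Suc ` {1..length ys}. 1 / real ((a # m # ys) ! j - (a # m # ys) ! (j - 1)))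
     = (\<Prod>j\<in>{1..length ys}. 1 / real ((m # ys) ! j - (m # ys) ! (j - 1)))"
    by (subst prod.reindex) (auto intro!: prod.cong simp: Suc_pred' nth_Cons')
  finally show ?case using Cons by simp
qed

definition Lg :: "nat \<Rightarrow> nat \<Rightarrow> nat \<Rightarrow> nat list set" where
  "Lg N a k = {xs. sorted_wrt (<) xs \<and> length xs = k \<and> set xs \<subseteq> {a<..N}}"

lemma Lg_finite: "finite (Lg N a k)"
  unfolding Lg_def
  by (rule finite_subset[OF _ finite_lists_length_eq[OF finite_greaterThanAtMost, of a N k]]) auto

lemma Lg_Suc: "Lg N a (Suc k) = (\<lambda>(m, ys). m # ys) ` (SIGMA m:{a<..N}. Lg N m k)"
proof (intro equalityI subsetI)
  fix xs assume "xs \<in> Lg N a (Suc k)"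
  then obtain m ys where xs: "xs = m # ys" unfolding Lg_def by (cases xs) auto
  with \<open>xs \<in> Lg N a (Suc k)\<close> have "m \<in> {a<..N}" "ys \<in> Lg N m k"
    unfolding Lg_def by auto
  then show "xs \<in> (\<lambda>(m, ys). m # ys) ` (SIGMA m:{a<..N}. Lg N m k)"
    unfolding xs by (intro rev_image_eqI[of "(m, ys)"]) auto
next
  fix xs assume "xs \<in> (\<lambda>(m, ys). m # ys) ` (SIGMA m:{a<..N}. Lg N m k)"
  then show "xs \<in> Lg N a (Suc k)"
    unfolding Lg_def by (auto simp: subset_iff)
qed

definition H :: "nat \<Rightarrow> real" where "H N = (\<Sum>m\<in>{1..N}. 1 / real m)"

lemma H_shift: "(\<Sum>m\<in>{a<..N}. 1 / real (m - a)) \<le> H N"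
proof -
  have "(\<Sum>m\<in>{a<..N}. 1 / real (m - a)) = (\<Sum>i\<in>(\<lambda>m. m - a) ` {a<..N}. 1 / real i)"
    by (subst sum.reindex) (auto simp: inj_on_def)
  also have "\<dots> \<le> H N" unfolding H_def
    by (rule sum_mono2) auto
  finally show ?thesis .
qed

lemma H_nonneg: "0 \<le> H N" unfolding H_def by (auto intro: sum_nonneg)

lemma gap_sum: "(\<Sum>xs\<in>Lg N a k. gw a xs) \<le> H N ^ k"
proof (induction k arbitrary: a)
  case 0
  have "Lg N a 0 = {[]}" unfolding Lg_def by auto
  then show ?case by simp
next
  case (Suc k)
  have "(\<Sum>xs\<in>Lg N a (Suc k). gw a xs) = (\<Sum>(m, ys)\<in>(SIGMA m:{a<..N}. Lg N m k). gw a (m # ys))"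
    unfolding Lg_Suc by (subst sum.reindex) (auto simp: inj_on_def intro!: sum.cong split: prod.splits)
  also have "\<dots> = (\<Sum>m\<in>{a<..N}. \<Sum>ys\<in>Lg N m k. gw a (m # ys))"
    by (rule sum.Sigma[symmetric]) (auto simp: Lg_finite)
  also have "\<dots> = (\<Sum>m\<in>{a<..N}. 1 / real (m - a) * (\<Sum>ys\<in>Lg N m k. gw m ys))"
    by (simp add: sum_distrib_left)
  also have "\<dots> \<le> (\<Sum>m\<in>{a<..N}. 1 / real (m - a) * H N ^ k)"
    by (intro sum_mono mult_left_mono Suc) auto
  also have "\<dots> = (\<Sum>m\<in>{a<..N}. 1 / real (m - a)) * H N ^ k"
    by (simp add: sum_distrib_right)
  also have "\<dots> \<le> H N * H N ^ k"
    by (intro mult_right_mono H_shift) (simp add: H_nonneg)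
  finally show ?case by simp
qed

lemma H_le: "H N \<le> 1 + ln (real N)"
proof (induction N)
  case 0 then show ?case by (simp add: H_def)
next
  case (Suc n)
  show ?case
  proof (cases "n = 0")
    case True then show ?thesis by (simp add: H_def)
  next
    case False
    have "ln (real n / real (Suc n)) \<le> real n / real (Suc n) - 1"
      by (rule ln_le_minus_one) (use False in simp)
    moreover have "real n / real (Suc n) - 1 = - (1 / real (Suc n))"
      by (simp add: field_simps)
    moreover have "ln (real n / real (Suc n)) = ln (real n) - ln (real (Suc n))"
      using False by (simp add: ln_div)
    ultimately have "1 / real (Suc n) \<le> ln (real (Suc n)) - ln (real n)" by linarith
    moreover have "H (Suc n) = H n + 1 / real (Suc n)" unfolding H_def by simp
    ultimately show ?thesis using Suc by linarith
  qed
qed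



lemma round_small:
  fixes z :: real assumes "\<bar>z\<bar> \<le> 1"
  shows "real_of_int (round z) \<in> {-1, 0, 1}" "\<bar>z - real_of_int (round z)\<bar> \<le> 1/2"
proof -
  have a: "of_int (round z) \<ge> z - 1/2" by (rule of_int_round_ge)
  have b: "of_int (round z) \<le> z + 1/2" by (rule of_int_round_le)
  show "\<bar>z - real_of_int (round z)\<bar> \<le> 1/2" using a b by linarith
  have "real_of_int (round z) > real_of_int (-2)" using a assms by auto
  then have l: "round z > -2" by (simp only: of_int_less_iff)
  have "real_of_int (round z) < real_of_int 2" using b assms by auto
  then have u: "round z < 2" by (simp only: of_int_less_iff)
  from l u have "round z = -1 \<or> round z = 0 \<or> round z = 1" by auto
  then show "real_of_int (round z) \<in> {-1, 0, 1}" by auto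
qed

lemma unit_cube_borel[measurable]: "unit_cube c \<in> sets borel"
proof -
  have "unit_cube c = (\<Inter>i. {y. \<bar>y $ i - c $ i\<bar> \<le> 1/2})" unfolding unit_cube_def by auto
  moreover have "closed (\<Inter>i. {y::real^2. \<bar>y $ i - c $ i\<bar> \<le> 1/2})"
    by (intro closed_INT ballI closed_Collect_le continuous_intros)
  ultimately show ?thesis by (simp add: borel_closed)
qed

lemma bs_meas:
  assumes fm: "f \<in> measurable M M" and tm: "\<tau> \<in> borel_measurable M"
  shows "birkhoff_sum f \<tau> n \<in> borel_measurable M"
proof -
  have fk: "f ^^ k \<in> measurable M M" for k
  proof (induction k)
    case 0 then show ?case by (simp add: measurable_ident_sets)
  next
    case (Suc k) then show ?case unfolding funpow.simps(2) by (rule measurable_comp[OF _ fm])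
  qed
  have e: "birkhoff_sum f \<tau> n = (\<lambda>x. \<Sum>k<n. \<tau> ((f ^^ k) x))" by (simp add: fun_eq_iff birkhoff_sum_def)
  show ?thesis unfolding e
    by (intro borel_measurable_sum measurable_compose[OF fk tm])
qed

definition Ocube :: "(real^2) set" where "Ocube = {v. \<forall>i. v $ i \<in> {-1, 0, 1}}"

lemma Ocube_finite: "finite Ocube"
proof -
  have "Ocube \<subseteq> (\<lambda>h. \<chi> i. h i) ` (PiE UNIV (\<lambda>_. {-1, 0, 1::real}))"
  proof
    fix v assume "v \<in> Ocube"
    then have "(\<lambda>i. v $ i) \<in> PiE UNIV (\<lambda>_. {-1, 0, 1::real})" unfolding Ocube_def by auto
    moreover have "v = (\<chi> i. (\<lambda>i. v $ i) i)" by simp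
    ultimately show "v \<in> (\<lambda>h. \<chi> i. h i) ` (PiE UNIV (\<lambda>_. {-1, 0, 1::real}))" by blast
  qed
  moreover have "finite (PiE (UNIV :: 2 set) (\<lambda>_. {-1, 0, 1::real}))" by (intro finite_PiE) auto
  ultimately show ?thesis by (meson finite_imageI finite_subset)
qed

lemma E_bound:
  fixes \<mu> :: "'a measure" and \<Theta> :: "real \<Rightarrow> real"
  assumes P: "prob_space \<mu>" and fm: "f \<in> measurable \<mu> \<mu>" and tm: "\<tau> \<in> borel_measurable \<mu>"
    and p1: "p \<ge> 1" and am: "antimono \<Theta>" and Tnn: "\<And>r. 0 \<le> \<Theta> r"
    and bound: "\<forall>(n::nat \<Rightarrow> nat) (c::nat \<Rightarrow> real^2).
            n 0 = 0 \<longrightarrow> (\<forall>j\<in>{1..p}. n (j - 1) < n j) \<longrightarrow> c 0 = 0 \<longrightarrow>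
            measure \<mu> {x \<in> space \<mu>. \<forall>j\<in>{1..p}. birkhoff_sum f \<tau> (n j) x \<in> unit_cube (c j)}
              \<le> K * (\<Prod>j\<in>{1..p}. 1 / real (n j - n (j - 1)))
                  * \<Theta> (Max ((\<lambda>j. norm (c j - c (j - 1)) / sqrt (real (n j - n (j - 1)))) ` {1..p}))"
    and xs: "xs \<in> Lg N 0 p"
  shows "measure \<mu> {x \<in> space \<mu>. \<forall>n\<in>set xs. norm (birkhoff_sum f \<tau> n x - t) \<le> 1}
          \<le> real (card Ocube) ^ p * max K 0 * \<Theta> 0 * gw 0 xs"
proof -
  interpret prob_space \<mu> by (rule P)
  have bsm[measurable]: "birkhoff_sum f \<tau> n \<in> borel_measurable \<mu>" for n
    by (rule bs_meas[OF fm tm])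
  have len: "length xs = p" and srt: "sorted_wrt (<) xs" and sxs: "set xs \<subseteq> {0<..N}"
    using xs unfolding Lg_def by auto
  define n where "n = (\<lambda>j. (0 # xs) ! j)"
  have n0: "n 0 = 0" unfolding n_def by simp
  have nj: "n j = xs ! (j - 1)" if "j \<ge> 1" for j
    using that unfolding n_def by (simp add: nth_Cons')
  have nmem: "n j \<in> set xs" if "j \<in> {1..p}" for j
    using that len nj by auto
  have ninc: "\<forall>j\<in>{1..p}. n (j - 1) < n j"
  proof
    fix j assume j: "j \<in> {1..p}"
    show "n (j - 1) < n j"
    proof (cases "j = 1")
      case True
      then show ?thesis using nmem[OF j] sxs n0 by auto
    next
      case False
      then have "n (j - 1) = xs ! (j - 2)" "n j = xs ! (j - 1)" using j nj by (auto simp: numeral_2_eq_2)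
      moreover have "xs ! (j - 2) < xs ! (j - 1)"
        by (rule sorted_wrt_nth_less[OF srt]) (use j False len in auto)
      ultimately show ?thesis by simp
    qed
  qed
  define G where "G = PiE {1..p} (\<lambda>_. Ocube)"
  define cc where "cc g = (\<lambda>j::nat. if j = 0 then (0::real^2) else t + g j)" for g :: "nat \<Rightarrow> real^2"
  define F where "F g = {x \<in> space \<mu>. \<forall>j\<in>{1..p}. birkhoff_sum f \<tau> (n j) x \<in> unit_cube (cc g j)}" for g
  define E where "E = {x \<in> space \<mu>. \<forall>n\<in>set xs. norm (birkhoff_sum f \<tau> n x - t) \<le> 1}"
  have memU: "{x \<in> space \<mu>. birkhoff_sum f \<tau> m x \<in> U} \<in> sets \<mu>" if "U \<in> sets borel" for m U
    using measurable_sets_Collect[OF bs_meas[OF fm tm], of "\<lambda>y. y \<in> U"] that by simp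
  have Fm: "F g \<in> sets \<mu>" for g unfolding F_def
    by (intro sets.sets_Collect_finite_All memU unit_cube_borel) auto
  have Gfin: "finite G" unfolding G_def by (intro finite_PiE) (auto simp: Ocube_finite)
  have sub: "E \<subseteq> (\<Union>g\<in>G. F g)"
  proof
    fix x assume x: "x \<in> E"
    define rnd where "rnd y = (\<chi> i. real_of_int (round (y $ i)))" for y :: "real^2"
    define g where "g = (\<lambda>j. if j \<in> {1..p} then rnd (birkhoff_sum f \<tau> (n j) x - t) else undefined)"
    have good: "norm (birkhoff_sum f \<tau> (n j) x - t) \<le> 1" if "j \<in> {1..p}" for j
      using x nmem[OF that] unfolding E_def by auto
    have comp: "\<bar>(birkhoff_sum f \<tau> (n j) x - t) $ i\<bar> \<le> 1" if "j \<in> {1..p}" for j i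
      using component_le_norm_cart[of "birkhoff_sum f \<tau> (n j) x - t" i] good[OF that] by linarith
    have rO: "rnd (birkhoff_sum f \<tau> (n j) x - t) \<in> Ocube" if j: "j \<in> {1..p}" for j
      unfolding rnd_def Ocube_def mem_Collect_eq vec_lambda_beta
      using round_small(1)[OF comp[OF j]] by blast
    have "g \<in> G" unfolding G_def g_def using rO by auto
    moreover have "x \<in> F g"
    proof -
      have "birkhoff_sum f \<tau> (n j) x \<in> unit_cube (cc g j)" if j: "j \<in> {1..p}" for j
      proof -
        have "\<bar>birkhoff_sum f \<tau> (n j) x $ i - cc g j $ i\<bar> \<le> 1/2" for i
        proof -
          have "cc g j $ i = t $ i + real_of_int (round ((birkhoff_sum f \<tau> (n j) x - t) $ i))"
            using j unfolding cc_def g_def rnd_def by auto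
          then show ?thesis using round_small(2)[OF comp[OF j, of i]] by (simp add: diff_diff_eq)
        qed
        then show ?thesis unfolding unit_cube_def by auto
      qed
      then show ?thesis using x unfolding F_def E_def by auto
    qed
    ultimately show "x \<in> (\<Union>g\<in>G. F g)" by blast
  qed
  have "measure \<mu> E \<le> measure \<mu> (\<Union>g\<in>G. F g)"
    by (rule finite_measure_mono[OF sub]) (use Gfin Fm in auto)
  also have "\<dots> \<le> (\<Sum>g\<in>G. measure \<mu> (F g))"
    by (rule measure_UNION_le[OF Gfin Fm])
  also have "\<dots> \<le> (\<Sum>g\<in>G. max K 0 * gw 0 xs * \<Theta> 0)"
  proof (rule sum_mono)
    fix g assume "g \<in> G"
    have cc0: "cc g 0 = 0" unfolding cc_def by simp
    have b: "measure \<mu> (F g) \<le> K * (\<Prod>j\<in>{1..p}. 1 / real (n j - n (j - 1)))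
        * \<Theta> (Max ((\<lambda>j. norm (cc g j - cc g (j - 1)) / sqrt (real (n j - n (j - 1)))) ` {1..p}))"
      unfolding F_def using mp[OF mp[OF mp[OF spec[OF spec[OF bound, of n], of "cc g"] n0] ninc] cc0] .
    have pr: "(\<Prod>j\<in>{1..p}. 1 / real (n j - n (j - 1))) = gw 0 xs"
      using gw_prod[where a=0 and xs=xs] len unfolding n_def by simp
    have m1: "1 \<in> {1..p}" using p1 by simp
    define Mx where "Mx = Max ((\<lambda>j. norm (cc g j - cc g (j - 1)) / sqrt (real (n j - n (j - 1)))) ` {1..p})"
    have "norm (cc g 1 - cc g (1 - 1)) / sqrt (real (n 1 - n (1 - 1))) \<le> Mx"
      unfolding Mx_def by (rule Max_ge[OF finite_imageI[OF finite_atLeastAtMost] imageI[OF m1]])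
    moreover have "0 \<le> norm (cc g 1 - cc g (1 - 1)) / sqrt (real (n 1 - n (1 - 1)))" by simp
    ultimately have "0 \<le> Mx" by linarith
    then have "\<Theta> Mx \<le> \<Theta> 0" using am unfolding antimono_def by auto
    have g0: "0 \<le> gw 0 xs" by (rule gw_nonneg)
    have "K * gw 0 xs * \<Theta> Mx \<le> max K 0 * gw 0 xs * \<Theta> Mx"
      by (intro mult_right_mono Tnn g0) auto
    also have "\<dots> \<le> max K 0 * gw 0 xs * \<Theta> 0"
      by (intro mult_left_mono \<open>\<Theta> Mx \<le> \<Theta> 0\<close>) (use g0 in auto)
    finally show "measure \<mu> (F g) \<le> max K 0 * gw 0 xs * \<Theta> 0"
      using b pr unfolding Mx_def by simp
  qed
  also have "\<dots> = real (card Ocube) ^ p * max K 0 * \<Theta> 0 * gw 0 xs"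
    unfolding G_def by (simp add: card_PiE)
  finally show ?thesis unfolding E_def .
qed



lemma moment_main:
  fixes \<mu> :: "'a measure" and \<Theta> :: "real \<Rightarrow> real"
  assumes P: "prob_space \<mu>" and fm: "f \<in> measurable \<mu> \<mu>" and tm: "\<tau> \<in> borel_measurable \<mu>"
    and p1: "p \<ge> 1" and am: "antimono \<Theta>" and Tnn: "\<And>r. 0 \<le> \<Theta> r"
    and bound: "\<forall>(n::nat \<Rightarrow> nat) (c::nat \<Rightarrow> real^2).
            n 0 = 0 \<longrightarrow> (\<forall>j\<in>{1..p}. n (j - 1) < n j) \<longrightarrow> c 0 = 0 \<longrightarrow>
            measure \<mu> {x \<in> space \<mu>. \<forall>j\<in>{1..p}. birkhoff_sum f \<tau> (n j) x \<in> unit_cube (c j)}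
              \<le> K * (\<Prod>j\<in>{1..p}. 1 / real (n j - n (j - 1)))
                  * \<Theta> (Max ((\<lambda>j. norm (c j - c (j - 1)) / sqrt (real (n j - n (j - 1)))) ` {1..p}))"
  shows "(\<integral>x. real (local_time f \<tau> x t N) ^ p \<partial>\<mu>)
     \<le> 2^p * (1 + real p ^ p) + 2^p * real p ^ p * (real (card Ocube) ^ p * max K 0 * \<Theta> 0) * H N ^ p"
proof -
  interpret prob_space \<mu> by (rule P)
  have bsm[measurable]: "birkhoff_sum f \<tau> n \<in> borel_measurable \<mu>" for n
    by (rule bs_meas[OF fm tm])
  define L where "L = Lg N 0 p"
  define E where "E xs = {x \<in> space \<mu>. \<forall>n\<in>set xs. norm (birkhoff_sum f \<tau> n x - t) \<le> 1}" for xs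
  define D where "D = real (card Ocube) ^ p * max K 0 * \<Theta> 0"
  define c0 where "c0 = (2::real)^p * (1 + real p ^ p)"
  define c1 where "c1 = (2::real)^p * real p ^ p"
  have Em[measurable]: "E xs \<in> sets \<mu>" for xs unfolding E_def by measurable
  have Lfin: "finite L" unfolding L_def by (rule Lg_finite)
  define A where "A x = {n \<in> {1..N}. norm (birkhoff_sum f \<tau> n x - t) \<le> 1}" for x
  define g where "g x = c0 + c1 * (\<Sum>xs\<in>L. indicator (E xs) x)" for x
  have pw: "real (local_time f \<tau> x t N) ^ p \<le> g x" if x: "x \<in> space \<mu>" for x
  proof -
    have finA: "finite (A x)" unfolding A_def by auto
    have "local_time f \<tau> x t N \<le> card (insert 0 (A x))"
      unfolding local_time_def A_def by (intro card_mono) auto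
    also have "\<dots> \<le> card (A x) + 1" by (simp add: card_insert_if finA)
    finally have lt: "real (local_time f \<tau> x t N) \<le> 1 + real (card (A x))" by simp
    define a where "a = card (A x)"
    have "real (local_time f \<tau> x t N) ^ p \<le> (1 + real a) ^ p"
      using lt by (intro power_mono) (auto simp: a_def)
    also have "\<dots> \<le> 2^p * (1 + real a ^ p)"
    proof (cases "a = 0")
      case True
      have "(1::real) \<le> 2 ^ p" by (rule one_le_power) simp
      then show ?thesis using True p1 by (simp add: power_0_left)
    next
      case False
      have "(1 + real a) ^ p \<le> (2 * real a) ^ p" using False by (intro power_mono) auto
      also have "\<dots> = 2^p * real a ^ p" by (simp add: power_mult_distrib)
      also have "\<dots> \<le> 2^p * (1 + real a ^ p)" by simp
      finally show ?thesis .
    qed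
    also have "\<dots> \<le> 2^p * (1 + real p ^ p * (1 + real (a choose p)))"
      using pow_bound[of a p] by (intro mult_left_mono add_left_mono) auto
    also have "\<dots> \<le> 2^p * (1 + real p ^ p * (1 + (\<Sum>xs\<in>L. indicator (E xs) x)))"
    proof -
      have "a choose p \<le> card {xs. sorted_wrt (<) xs \<and> length xs = p \<and> set xs \<subseteq> A x}"
        using card_subsets_le[OF finA, of p] a_def by simp
      also have "{xs. sorted_wrt (<) xs \<and> length xs = p \<and> set xs \<subseteq> A x} = {xs \<in> L. x \<in> E xs}"
        unfolding L_def Lg_def A_def E_def using x by auto
      finally have "real (a choose p) \<le> real (card {xs \<in> L. x \<in> E xs})" by simp
      also have "\<dots> = (\<Sum>xs\<in>{xs \<in> L. x \<in> E xs}. 1)" by simp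
      also have "\<dots> = (\<Sum>xs\<in>L. if x \<in> E xs then 1 else 0)" by (rule sum.inter_filter[OF Lfin])
      also have "\<dots> = (\<Sum>xs\<in>L. indicator (E xs) x)" by (simp add: indicator_def of_bool_def)
      finally show ?thesis by (intro mult_left_mono add_left_mono) auto
    qed
    also have "\<dots> = g x" unfolding g_def c0_def c1_def by (simp add: algebra_simps)
    finally show ?thesis .
  qed
  have lt_eq: "(\<lambda>x. real (local_time f \<tau> x t N) ^ p)
      = (\<lambda>x. (\<Sum>n\<in>{0..N}. if norm (birkhoff_sum f \<tau> n x - t) \<le> 1 then 1 else 0 :: real) ^ p)"
  proof
    fix x
    have "real (local_time f \<tau> x t N) = (\<Sum>n\<in>{n \<in> {0..N}. norm (birkhoff_sum f \<tau> n x - t) \<le> 1}. 1)"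
      unfolding local_time_def by simp
    also have "\<dots> = (\<Sum>n\<in>{0..N}. if norm (birkhoff_sum f \<tau> n x - t) \<le> 1 then 1 else 0)"
      by (rule sum.inter_filter) simp
    finally show "real (local_time f \<tau> x t N) ^ p
      = (\<Sum>n\<in>{0..N}. if norm (birkhoff_sum f \<tau> n x - t) \<le> 1 then 1 else 0 :: real) ^ p" by simp
  qed
  have lhsm: "(\<lambda>x. real (local_time f \<tau> x t N) ^ p) \<in> borel_measurable \<mu>"
    unfolding lt_eq by measurable
  have lhsint: "integrable \<mu> (\<lambda>x. real (local_time f \<tau> x t N) ^ p)"
  proof (rule integrable_const_bound[where B = "real (Suc N) ^ p"])
    show "AE x in \<mu>. norm (real (local_time f \<tau> x t N) ^ p) \<le> real (Suc N) ^ p"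
    proof (rule AE_I2)
      fix x
      have "local_time f \<tau> x t N \<le> card {0..N}"
        unfolding local_time_def by (intro card_mono) auto
      then have "real (local_time f \<tau> x t N) \<le> real (Suc N)" by simp
      then show "norm (real (local_time f \<tau> x t N) ^ p) \<le> real (Suc N) ^ p"
        by (simp add: power_mono)
    qed
  qed (rule lhsm)
  have indint: "integrable \<mu> (indicator (E xs) :: 'a \<Rightarrow> real)" for xs
    by (rule integrable_real_indicator) (simp_all add: Em less_top[symmetric] emeasure_finite)
  have gint: "integrable \<mu> g" unfolding g_def
    by (intro Bochner_Integration.integrable_add integrable_mult_right Bochner_Integration.integrable_sum indint integrable_const)
  have "(\<integral>x. real (local_time f \<tau> x t N) ^ p \<partial>\<mu>) \<le> (\<integral>x. g x \<partial>\<mu>)"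
    by (rule integral_mono[OF lhsint gint pw])
  also have "(\<integral>x. g x \<partial>\<mu>) = c0 + c1 * (\<Sum>xs\<in>L. measure \<mu> (E xs))"
  proof -
    have "(\<integral>x. g x \<partial>\<mu>) = (\<integral>x. c0 \<partial>\<mu>) + (\<integral>x. c1 * (\<Sum>xs\<in>L. (indicator (E xs) x :: real)) \<partial>\<mu>)"
      unfolding g_def
      by (rule Bochner_Integration.integral_add) (auto intro!: integrable_mult_right Bochner_Integration.integrable_sum indint)
    also have "(\<integral>x. c1 * (\<Sum>xs\<in>L. (indicator (E xs) x :: real)) \<partial>\<mu>) = c1 * (\<integral>x. (\<Sum>xs\<in>L. (indicator (E xs) x :: real)) \<partial>\<mu>)"
      by (rule integral_mult_right_zero)
    also have "(\<integral>x. (\<Sum>xs\<in>L. (indicator (E xs) x :: real)) \<partial>\<mu>) = (\<Sum>xs\<in>L. (\<integral>x. (indicator (E xs) x :: real) \<partial>\<mu>))"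
      by (intro Bochner_Integration.integral_sum indint)
    also have "\<dots> = (\<Sum>xs\<in>L. measure \<mu> (E xs))"
    proof (rule sum.cong[OF refl])
      fix xs
      have "E xs \<inter> space \<mu> = E xs" unfolding E_def by auto
      then show "(\<integral>x. (indicator (E xs) x :: real) \<partial>\<mu>) = measure \<mu> (E xs)"
        using Bochner_Integration.integral_indicator[where A="E xs" and M=\<mu>] by simp
    qed
    finally show ?thesis by (simp add: prob_space)
  qed
  also have "\<dots> \<le> c0 + c1 * (D * H N ^ p)"
  proof -
    have "(\<Sum>xs\<in>L. measure \<mu> (E xs)) \<le> (\<Sum>xs\<in>L. D * gw 0 xs)"
    proof (rule sum_mono)
      fix xs assume "xs \<in> L"
      then show "measure \<mu> (E xs) \<le> D * gw 0 xs"
        using E_bound[OF P fm tm p1 am Tnn bound, of xs N t] unfolding L_def E_def D_def by simp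
    qed
    also have "\<dots> = D * (\<Sum>xs\<in>L. gw 0 xs)" by (simp add: sum_distrib_left)
    also have "\<dots> \<le> D * H N ^ p"
      unfolding L_def by (intro mult_left_mono gap_sum) (auto simp: D_def Tnn)
    finally show ?thesis unfolding c1_def by (intro add_left_mono mult_left_mono) auto
  qed
  finally show ?thesis unfolding c0_def c1_def D_def by (simp add: mult.assoc)
qed



theorem lemma3p3:
  fixes \<mu> :: "'a measure" and f :: "'a \<Rightarrow> 'a" and \<tau> :: "'a \<Rightarrow> real^2"
  assumes "prob_space \<mu>"
    and "f \<in> measurable \<mu> \<mu>" and "distr \<mu> \<mu> f = \<mu>"
    and "\<tau> \<in> borel_measurable \<mu>"
    and "anticoncentration \<mu> f \<tau>"
  shows "\<forall>p::nat. \<exists>C::real. \<forall>(t::real^2) (N::nat). N \<ge> 2 \<longrightarrow>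
           (\<integral>x. real (local_time f \<tau> x t N) ^ p \<partial>\<mu>) \<le> C * (ln (real N)) ^ p"
proof
  fix p :: nat
  show "\<exists>C::real. \<forall>(t::real^2) (N::nat). N \<ge> 2 \<longrightarrow>
           (\<integral>x. real (local_time f \<tau> x t N) ^ p \<partial>\<mu>) \<le> C * (ln (real N)) ^ p"
  proof (cases "p = 0")
    case True
    have "(\<integral>x. real (local_time f \<tau> x t N) ^ p \<partial>\<mu>) = 1" for t N
      using True prob_space.prob_space[OF assms(1)] by simp
    then show ?thesis using True by (intro exI[of _ 1]) simp
  next
    case False
    then have p1: "p \<ge> 1" by simp
    from assms(5)[unfolded anticoncentration_def, rule_format, OF p1]
    obtain K \<Theta> where am: "antimono \<Theta>" and int: "(\<lambda>r. \<Theta> r * r ^ 2) integrable_on {1..}"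
      and bnd: "\<forall>(n::nat \<Rightarrow> nat) (c::nat \<Rightarrow> real^2).
            n 0 = 0 \<longrightarrow> (\<forall>j\<in>{1..p}. n (j - 1) < n j) \<longrightarrow> c 0 = 0 \<longrightarrow>
            measure \<mu> {x \<in> space \<mu>. \<forall>j\<in>{1..p}. birkhoff_sum f \<tau> (n j) x \<in> unit_cube (c j)}
              \<le> K * (\<Prod>j\<in>{1..p}. 1 / real (n j - n (j - 1)))
                  * \<Theta> (Max ((\<lambda>j. norm (c j - c (j - 1)) / sqrt (real (n j - n (j - 1)))) ` {1..p}))"
      by blast
    have Tnn: "\<And>r. 0 \<le> \<Theta> r" by (rule theta_nonneg[OF am int])
    define D where "D = real (card Ocube) ^ p * max K 0 * \<Theta> 0"
    define c0 where "c0 = (2::real)^p * (1 + real p ^ p)"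
    define c1 where "c1 = (2::real)^p * real p ^ p"
    define C where "C = c0 * (1 / ln 2) ^ p + c1 * D * (1 / ln 2 + 1) ^ p"
    show ?thesis
    proof (intro exI[of _ C] allI impI)
      fix t :: "real^2" and N :: nat assume N2: "2 \<le> N"
      have mm: "(\<integral>x. real (local_time f \<tau> x t N) ^ p \<partial>\<mu>) \<le> c0 + c1 * D * H N ^ p"
        using moment_main[OF assms(1,2,4) p1 am Tnn bnd, of t N] unfolding D_def c0_def c1_def by simp
      have l2: "0 < ln (2::real)" by simp
      have lN: "ln 2 \<le> ln (real N)" using N2 by simp
      have q: "1 \<le> (1 / ln 2) * ln (real N)" using l2 lN by simp
      have one: "1 \<le> (1 / ln 2) ^ p * ln (real N) ^ p"
      proof -
        have "1 \<le> ((1 / ln 2) * ln (real N)) ^ p" using q by (rule one_le_power)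
        then show ?thesis by (simp add: power_mult_distrib power_divide)
      qed
      have Hb: "H N \<le> (1 / ln 2 + 1) * ln (real N)"
      proof -
        have "(1 / ln 2 + 1) * ln (real N) = (1 / ln 2) * ln (real N) + ln (real N)"
          by (simp add: ring_distribs)
        then show ?thesis using H_le[of N] q by linarith
      qed
      have Hp: "H N ^ p \<le> (1 / ln 2 + 1) ^ p * ln (real N) ^ p"
        using power_mono[OF Hb H_nonneg, of p] by (simp add: power_mult_distrib)
      have D0: "0 \<le> D" unfolding D_def using Tnn by simp
      have c00: "0 \<le> c0" "0 \<le> c1" unfolding c0_def c1_def by simp_all
      have a: "c0 \<le> c0 * ((1 / ln 2) ^ p * ln (real N) ^ p)"
        using mult_left_mono[OF one c00(1)] by simp
      have b: "c1 * D * H N ^ p \<le> c1 * D * ((1 / ln 2 + 1) ^ p * ln (real N) ^ p)"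
        by (intro mult_left_mono Hp) (use D0 c00 in simp)
      have e: "C * ln (real N) ^ p = c0 * ((1 / ln 2) ^ p * ln (real N) ^ p) + c1 * D * ((1 / ln 2 + 1) ^ p * ln (real N) ^ p)"
        unfolding C_def by (simp add: algebra_simps)
      show "(\<integral>x. real (local_time f \<tau> x t N) ^ p \<partial>\<mu>) \<le> C * ln (real N) ^ p"
        using mm a b e by linarith
    qed
  qed
qed

end
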